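(* For $N=3$ there exists a Weyl channel $\Phi\in\mathcal{A}_3^Q$ (accessible by a Lindblad semigroup) which is not unistochastic, i.e. there is no $U\in U(9)$ with $\Phi(\rho)=\mathrm{Tr}_E\big[U(\rho\otimes\tfrac{\mathbb{I}_3}{3})U^\dagger\big]$ for all $\rho$.
   Context: $\omega=e^{2\pi i/3}$, $X|j\rangle=|j\oplus1\rangle$ (addition mod 3), $Z=\mathrm{diag}(1,\omega,\omega^2)$, Weyl unitaries $U_\mu=X^kZ^l$, $\mu=3k+l\in\{0,\dots,8\}$. Superoperators act on $|A\rangle\rangle=\sum A_{ij}|i\rangle|j\rangle$ ($\rho\mapsto K\rho K^\dagger$ corresponds to $K\otimes\overline K$). $\mathcal{L}_\mu=U_\mu\otimes\overline{U}_\mu-\mathbb{I}_9$, and $\mathcal{A}_3^Q$ is the set of $\exp(\sum_{\mu=1}^8t_\mu\mathcal{L}_\mu)$ with all $t_\mu\ge0$. In the unistochasticity condition $U$ acts on $\mathbb{C}^3\otimes\mathbb{C}^3_E$ and $\mathrm{Tr}_E$ is the partial trace over the second (environment) factor. *)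

theory Defs
  imports "HOL-Analysis.Analysis" "HOL-Library.Numeral_Type"
begin

text \<open>Qutrit matrices: complex^3^3 (index type 3 = integers mod 3).
Superoperators: complex^(3*3)^(3*3); the vectorization is |A>> = sum A_ij |i>|j>,
i.e. the pair index (i,j) carries the entry A_ij.\<close>

definition omega :: complex where "omega = cis (2 * pi / 3)"

definition shiftX :: "complex^3^3" where
  "shiftX = (\<chi> i j. if i = j + 1 then 1 else 0)"

definition clockZ :: "complex^3^3" where
  "clockZ = (\<chi> i j. if i = j then (\<Sum>k<3::nat. if i = of_nat k then omega ^ k else 0) else 0)"

fun mpow :: "('a::semiring_1)^'n^'n \<Rightarrow> nat \<Rightarrow> 'a^'n^'n" where
  "mpow A 0 = mat 1"
| "mpow A (Suc n) = A ** mpow A n"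

definition weylU :: "nat \<Rightarrow> complex^3^3" where
  "weylU mu = mpow shiftX (mu div 3) ** mpow clockZ (mu mod 3)"

definition mconj :: "complex^'m^'n \<Rightarrow> complex^'m^'n" where
  "mconj A = (\<chi> i j. cnj (A $ i $ j))"

definition adjoint_mat :: "complex^'m^'n \<Rightarrow> complex^'n^'m" where
  "adjoint_mat A = (\<chi> i j. cnj (A $ j $ i))"

definition kron :: "complex^'n^'m \<Rightarrow> complex^'q^'p \<Rightarrow> complex^('n \<times> 'q)^('m \<times> 'p)" where
  "kron K L = (\<chi> p q. K $ fst p $ fst q * L $ snd p $ snd q)"

definition mexp :: "complex^'n^'n \<Rightarrow> complex^'n^'n" where
  "mexp A = (\<chi> i j. \<Sum>k. (mpow A k) $ i $ j / of_nat (fact k))"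

definition lindL :: "nat \<Rightarrow> complex^(3 \<times> 3)^(3 \<times> 3)" where
  "lindL mu = kron (weylU mu) (mconj (weylU mu)) - mat 1"

definition A3Q :: "(complex^(3 \<times> 3)^(3 \<times> 3)) set" where
  "A3Q = {mexp (\<Sum>mu\<in>{1..8}. t mu *\<^sub>R lindL mu) | t :: nat \<Rightarrow> real. \<forall>mu\<in>{1..8}. t mu \<ge> 0}"

definition apply_super :: "complex^(3 \<times> 3)^(3 \<times> 3) \<Rightarrow> complex^3^3 \<Rightarrow> complex^3^3" where
  "apply_super S rho = (\<chi> i j. \<Sum>k\<in>UNIV. \<Sum>l\<in>UNIV. S $ (i, j) $ (k, l) * rho $ k $ l)"

definition unitary_mat :: "complex^'n^'n \<Rightarrow> bool" where
  "unitary_mat U \<longleftrightarrow> U ** adjoint_mat U = mat 1 \<and> adjoint_mat U ** U = mat 1"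

definition ptrace_E :: "complex^('n \<times> 'e::finite)^('n \<times> 'e) \<Rightarrow> complex^'n^'n" where
  "ptrace_E M = (\<chi> i j. \<Sum>a\<in>UNIV. M $ (i, a) $ (j, a))"

definition unistochastic :: "complex^(3 \<times> 3)^(3 \<times> 3) \<Rightarrow> bool" where
  "unistochastic Phi \<longleftrightarrow>
     (\<exists>U :: complex^(3 \<times> 3)^(3 \<times> 3). unitary_mat U \<and>
        (\<forall>rho :: complex^3^3.
           apply_super Phi rho =
           ptrace_E (U ** kron rho ((1/3) *\<^sub>R (mat 1 :: complex^3^3)) ** adjoint_mat U)))"

end

theory Submission
  imports Defs
begin

definition hs :: "complex^'n^'m \<Rightarrow> complex^'n^'m \<Rightarrow> complex" where
  "hs M N = (\<Sum>i\<in>UNIV. \<Sum>j\<in>UNIV. M$i$j * cnj (N$i$j))"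

definition mi :: "complex^'n^'m \<Rightarrow> complex^'n^'m" where
  "mi M = (\<chi> i j. \<i> * M$i$j)"

lemma inner_mat: "(M::complex^'n^'m) \<bullet> N = Re (hs M N)"
  by (simp add: hs_def inner_vec_def inner_complex_def Re_sum)

lemma norm_sq_mat: "(norm (M::complex^'n^'m))^2 = (\<Sum>i\<in>UNIV. \<Sum>j\<in>UNIV. (cmod (M$i$j))^2)"
  by (simp add: norm_vec_def L2_set_def sum_nonneg)

lemma Im_hs: "Im (hs M N) = M \<bullet> mi N"
  by (simp add: inner_mat hs_def mi_def Re_sum Im_sum)

lemma norm_mi: "norm (mi M) = norm M"
proof -
  have "(norm (mi M))^2 = (norm M)^2" by (simp add: norm_sq_mat mi_def norm_mult)
  thus ?thesis by (simp add: power2_eq_iff_nonneg)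
qed

lemma mi_add: "mi (M + N) = mi M + mi N"
  by (simp add: mi_def vec_eq_iff algebra_simps)

lemma norm_adj: "norm (adjoint_mat M) = norm M"
proof -
  have "(norm (adjoint_mat M))^2 = (norm M)^2" 
    unfolding norm_sq_mat adjoint_mat_def by (simp, rule sum.swap)
  thus ?thesis by (simp add: power2_eq_iff_nonneg)
qed

lemma herm_orth:
  assumes "adjoint_mat R = R" "adjoint_mat P = P"
  shows "R \<bullet> mi P = 0"
proof -
  have r: "R$i$j = cnj (R$j$i)" for i j
  proof -
    have "adjoint_mat R $ i $ j = R $ i $ j" using assms(1) by simp
    thus ?thesis by (simp add: adjoint_mat_def)
  qed
  have p: "P$i$j = cnj (P$j$i)" for i j
  proof -
    have "adjoint_mat P $ i $ j = P $ i $ j" using assms(2) by simp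
    thus ?thesis by (simp add: adjoint_mat_def)
  qed
  have pw: "Im (R$i$j * cnj (P$i$j)) = - Im (R$j$i * cnj (P$j$i))" for i j
  proof -
    have "R$i$j * cnj (P$i$j) = cnj (R$j$i * cnj (P$j$i))" using r[of i j] p[of i j] by simp
    thus ?thesis by simp
  qed
  have "Im (hs R P) = (\<Sum>i\<in>UNIV. \<Sum>j\<in>UNIV. Im (R$i$j * cnj (P$i$j)))" by (simp add: hs_def Im_sum)
  also have "\<dots> = (\<Sum>i\<in>UNIV. \<Sum>j\<in>UNIV. - Im (R$j$i * cnj (P$j$i)))"
    by (intro sum.cong refl pw)
  also have "\<dots> = - (\<Sum>j\<in>UNIV. \<Sum>i\<in>UNIV. Im (R$j$i * cnj (P$j$i)))"
    using sum.swap[of "\<lambda>i j. Im (R$j$i * cnj (P$j$i))" UNIV UNIV] by (simp only: sum_negf)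
  finally have "Im (hs R P) = - Im (hs R P)" by (simp add: hs_def Im_sum)
  thus ?thesis by (simp add: Im_hs)
qed

lemma aherm_orth:
  assumes "adjoint_mat R = - R" "adjoint_mat P = - P"
  shows "R \<bullet> mi P = 0"
proof -
  have r: "R$i$j = - cnj (R$j$i)" for i j
  proof -
    have "adjoint_mat R $ i $ j = - R $ i $ j" using assms(1) by simp
    thus ?thesis by (simp add: adjoint_mat_def)
  qed
  have p: "P$i$j = - cnj (P$j$i)" for i j
  proof -
    have "adjoint_mat P $ i $ j = - P $ i $ j" using assms(2) by simp
    thus ?thesis by (simp add: adjoint_mat_def)
  qed
  have pw: "Im (R$i$j * cnj (P$i$j)) = - Im (R$j$i * cnj (P$j$i))" for i j
  proof -
    have "R$i$j * cnj (P$i$j) = cnj (R$j$i * cnj (P$j$i))" using r[of i j] p[of i j] by simp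
    thus ?thesis by simp
  qed
  have "Im (hs R P) = (\<Sum>i\<in>UNIV. \<Sum>j\<in>UNIV. Im (R$i$j * cnj (P$i$j)))" by (simp add: hs_def Im_sum)
  also have "\<dots> = (\<Sum>i\<in>UNIV. \<Sum>j\<in>UNIV. - Im (R$j$i * cnj (P$j$i)))"
    by (intro sum.cong refl pw)
  also have "\<dots> = - (\<Sum>j\<in>UNIV. \<Sum>i\<in>UNIV. Im (R$j$i * cnj (P$j$i)))"
    using sum.swap[of "\<lambda>i j. Im (R$j$i * cnj (P$j$i))" UNIV UNIV] by (simp only: sum_negf)
  finally have "Im (hs R P) = - Im (hs R P)" by (simp add: hs_def Im_sum)
  thus ?thesis by (simp add: Im_hs)
qed

lemma norm_mult_mat: "norm ((M::complex^'k^'n) ** (N::complex^'m^'k)) \<le> norm M * norm N"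
proof -
  define r where "r i = (\<Sum>k\<in>UNIV. (cmod (M$i$k))^2)" for i
  define c where "c j = (\<Sum>k\<in>UNIV. (cmod (N$k$j))^2)" for j
  have r0: "r i \<ge> 0" for i unfolding r_def by (simp add: sum_nonneg)
  have c0: "c i \<ge> 0" for i unfolding c_def by (simp add: sum_nonneg)
  have e: "(cmod ((M ** N)$i$j))^2 \<le> r i * c j" for i j
  proof -
    have "cmod ((M ** N)$i$j) = cmod (\<Sum>k\<in>UNIV. M$i$k * N$k$j)"
      by (simp add: matrix_matrix_mult_def)
    also have "\<dots> \<le> (\<Sum>k\<in>UNIV. cmod (M$i$k * N$k$j))" by (rule norm_sum)
    also have "\<dots> = (\<Sum>k\<in>UNIV. \<bar>cmod (M$i$k)\<bar> * \<bar>cmod (N$k$j)\<bar>)" by (simp add: norm_mult)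
    also have "\<dots> \<le> L2_set (\<lambda>k. cmod (M$i$k)) UNIV * L2_set (\<lambda>k. cmod (N$k$j)) UNIV"
      by (rule L2_set_mult_ineq)
    also have "\<dots> = sqrt (r i) * sqrt (c j)" 
      by (simp add: L2_set_def r_def c_def)
    finally have le: "cmod ((M ** N)$i$j) \<le> sqrt (r i) * sqrt (c j)" .
    have "(cmod ((M ** N)$i$j))^2 \<le> (sqrt (r i) * sqrt (c j))^2"
      by (rule power_mono[OF le norm_ge_zero])
    also have "\<dots> = r i * c j" using r0[of i] c0[of j] by (simp add: power_mult_distrib)
    finally show ?thesis .
  qed
  have "(norm (M ** N))^2 \<le> (\<Sum>i\<in>UNIV. \<Sum>j\<in>UNIV. r i * c j)"
    unfolding norm_sq_mat by (intro sum_mono e)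
  also have "\<dots> = (\<Sum>i\<in>UNIV. r i) * (\<Sum>j\<in>UNIV. c j)" by (simp add: sum_product)
  also have "(\<Sum>i\<in>UNIV. r i) = (norm M)^2" by (simp add: norm_sq_mat r_def)
  also have "(\<Sum>j\<in>UNIV. c j) = (norm N)^2" 
    unfolding norm_sq_mat c_def by (rule sum.swap)
  finally have "(norm (M ** N))^2 \<le> (norm M * norm N)^2" by (simp add: power_mult_distrib)
  thus ?thesis by (rule power2_le_imp_le) simp
qed

lemma hs_diff_left: "hs (M - N) K = hs M K - hs N K"
  by (simp add: hs_def algebra_simps sum_subtractf)
lemma hs_diff_right: "hs K (M - N) = hs K M - hs K N"
  by (simp add: hs_def algebra_simps sum_subtractf)
lemma hs_mat1: "hs (M::complex^'n^'n) (mat 1) = (\<Sum>i\<in>UNIV. M$i$i)"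
  by (simp add: hs_def mat_def if_distrib sum.delta cong: if_cong)
lemma hs_cnj: "hs N M = cnj (hs M N)"
  by (simp add: hs_def mult.commute)
lemma hs_mat1_left: "hs (mat 1) (M::complex^'n^'n) = cnj (\<Sum>i\<in>UNIV. M$i$i)"
  by (subst hs_cnj, simp add: hs_mat1)
lemma hs_mat11: "hs (mat 1 :: complex^'n^'n) (mat 1) = of_nat CARD('n)"
  unfolding hs_mat1 by (simp add: mat_def)

lemma unit_id:
  assumes "adjoint_mat A ** A = (mat 1 :: complex^'n^'n)"
  shows "adjoint_mat (A - mat 1) ** (A - mat 1) = - ((A - mat 1) + adjoint_mat (A - mat 1))"
proof -
  have h: "(\<Sum>k\<in>UNIV. cnj (A$k$i) * A$k$j) = (if i = j then 1 else 0)" for i j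
  proof -
    have "(adjoint_mat A ** A)$i$j = (mat 1 :: complex^'n^'n)$i$j" using assms by simp
    thus ?thesis by (simp add: matrix_matrix_mult_def adjoint_mat_def mat_def)
  qed
  show ?thesis
  proof -
    have "(adjoint_mat (A - mat 1) ** (A - mat 1))$i$j = (- ((A - mat 1) + adjoint_mat (A - mat 1)))$i$j" for i j
    proof -
    have "(adjoint_mat (A - mat 1) ** (A - mat 1))$i$j
       = (\<Sum>k\<in>UNIV. cnj ((A - mat 1)$k$i) * (A - mat 1)$k$j)"
      by (simp add: matrix_matrix_mult_def adjoint_mat_def)
    also have "\<dots> = (\<Sum>k\<in>UNIV. cnj (A$k$i) * A$k$j - (if k = j then cnj (A$k$i) else 0)
            - (if k = i then A$k$j else 0) + (if k = i then (if i = j then 1 else 0) else 0))"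
      by (intro sum.cong refl) (auto simp: mat_def algebra_simps)
    also have "\<dots> = (if i = j then 1 else 0) - cnj (A$j$i) - A$i$j + (if i = j then 1 else 0)"
      by (simp add: sum.distrib sum_subtractf h sum.delta')
    also have "\<dots> = (- ((A - mat 1) + adjoint_mat (A - mat 1)))$i$j"
      by (simp add: adjoint_mat_def mat_def)
    finally show ?thesis .
    qed
    thus ?thesis by (simp add: vec_eq_iff)
  qed
qed

lemma norm_unit_sq:
  assumes "adjoint_mat A ** A = (mat 1 :: complex^'n^'n)"
  shows "(norm (A - mat 1))^2 = 2 * CARD('n) - 2 * Re (hs A (mat 1))"
proof -
  have hAA: "hs A A = of_nat CARD('n)"
  proof -
    have "hs A A = (\<Sum>j\<in>UNIV. (adjoint_mat A ** A)$j$j)"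
      unfolding hs_def matrix_matrix_mult_def adjoint_mat_def
      by (simp, subst sum.swap, simp add: mult.commute)
    also have "\<dots> = of_nat CARD('n)" using assms by (simp add: mat_def)
    finally show ?thesis .
  qed
  have "(norm (A - mat 1))^2 = (A - mat 1) \<bullet> (A - mat 1)" by (simp add: power2_norm_eq_inner)
  also have "\<dots> = A \<bullet> A - 2 * (A \<bullet> mat 1) + mat 1 \<bullet> (mat 1 :: complex^'n^'n)"
    by (simp add: inner_diff_left inner_diff_right inner_commute)
  also have "\<dots> = 2 * CARD('n) - 2 * Re (hs A (mat 1))"
    by (simp add: inner_mat hAA hs_mat11)
  finally show ?thesis .
qed

lemma adj_add: "adjoint_mat (M + N) = adjoint_mat M + adjoint_mat N"
  by (simp add: adjoint_mat_def vec_eq_iff)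
lemma adj_diff: "adjoint_mat (M - N) = adjoint_mat M - adjoint_mat N"
  by (simp add: adjoint_mat_def vec_eq_iff)
lemma adj_uminus: "adjoint_mat (- M) = - adjoint_mat M"
  by (simp add: adjoint_mat_def vec_eq_iff)
lemma adj_scaleR: "adjoint_mat (r *\<^sub>R M) = r *\<^sub>R adjoint_mat M"
  by (simp add: adjoint_mat_def vec_eq_iff)
lemma adj_adj: "adjoint_mat (adjoint_mat M) = M"
  by (simp add: adjoint_mat_def vec_eq_iff)

lemma key_ineq:
  fixes A B :: "complex^'n^'n"
  assumes uA: "adjoint_mat A ** A = mat 1" and uB: "adjoint_mat B ** B = mat 1"
  shows "\<bar>Im (hs B A) - Im (hs B (mat 1)) + Im (hs A (mat 1))\<bar>
         \<le> norm (A - mat 1) * (norm (B - mat 1))^2 / 2 + (norm (A - mat 1))^2 * norm (B - mat 1) / 2"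
proof -
  define X where "X = A - mat 1"
  define Y where "Y = B - mat 1"
  define P where "P = (1/2) *\<^sub>R (X + adjoint_mat X)"
  define Q where "Q = (1/2) *\<^sub>R (X - adjoint_mat X)"
  define R where "R = (1/2) *\<^sub>R (Y + adjoint_mat Y)"
  define S where "S = (1/2) *\<^sub>R (Y - adjoint_mat Y)"
  have XPQ: "X = P + Q"
  proof -
    have "(X + adjoint_mat X) + (X - adjoint_mat X) = 2 *\<^sub>R X" by (simp add: scaleR_2)
    hence "P + Q = (1/2) *\<^sub>R (2 *\<^sub>R X)" unfolding P_def Q_def by (simp only: scaleR_add_right[symmetric])
    thus ?thesis by simp
  qed
  have YRS: "Y = R + S"
  proof -
    have "(Y + adjoint_mat Y) + (Y - adjoint_mat Y) = 2 *\<^sub>R Y" by (simp add: scaleR_2)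
    hence "R + S = (1/2) *\<^sub>R (2 *\<^sub>R Y)" unfolding R_def S_def by (simp only: scaleR_add_right[symmetric])
    thus ?thesis by simp
  qed
  have hP: "adjoint_mat P = P" unfolding P_def by (simp add: adj_scaleR adj_add adj_adj add.commute)
  have hR: "adjoint_mat R = R" unfolding R_def by (simp add: adj_scaleR adj_add adj_adj add.commute)
  have aQ: "adjoint_mat Q = - Q" unfolding Q_def by (simp add: adj_scaleR adj_diff adj_adj scaleR_diff_right)
  have aS: "adjoint_mat S = - S" unfolding S_def by (simp add: adj_scaleR adj_diff adj_adj scaleR_diff_right)
  have "hs Y X = hs B A - hs B (mat 1) - hs (mat 1) A + hs (mat 1) (mat 1 :: complex^'n^'n)"
    unfolding X_def Y_def by (simp add: hs_diff_left hs_diff_right)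
  hence "Im (hs Y X) = Im (hs B A) - Im (hs B (mat 1)) + Im (hs A (mat 1))"
    using hs_cnj[of "mat 1" A] by (simp add: hs_mat11)
  moreover have "Im (hs Y X) = R \<bullet> mi Q + S \<bullet> mi P"
  proof -
    have "Im (hs Y X) = (R + S) \<bullet> (mi P + mi Q)" by (simp add: Im_hs XPQ YRS mi_add)
    also have "\<dots> = R \<bullet> mi P + R \<bullet> mi Q + S \<bullet> mi P + S \<bullet> mi Q"
      by (simp add: inner_add_left inner_add_right)
    also have "\<dots> = R \<bullet> mi Q + S \<bullet> mi P"
      using herm_orth[OF hR hP] aherm_orth[OF aS aQ] by simp
    finally show ?thesis .
  qed
  moreover have "\<bar>R \<bullet> mi Q + S \<bullet> mi P\<bar> \<le> norm R * norm Q + norm S * norm P"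
  proof -
    have "\<bar>R \<bullet> mi Q\<bar> \<le> norm R * norm Q" using Cauchy_Schwarz_ineq2[of R "mi Q"] by (simp add: norm_mi)
    moreover have "\<bar>S \<bullet> mi P\<bar> \<le> norm S * norm P" using Cauchy_Schwarz_ineq2[of S "mi P"] by (simp add: norm_mi)
    ultimately show ?thesis by linarith
  qed
  moreover have nQ: "norm Q \<le> norm X"
  proof -
    have "norm Q = norm (X - adjoint_mat X) / 2" unfolding Q_def by simp
    also have "\<dots> \<le> (norm X + norm (adjoint_mat X)) / 2" using norm_triangle_ineq4[of X "adjoint_mat X"] by simp
    finally show ?thesis by (simp add: norm_adj)
  qed
  moreover have nS: "norm S \<le> norm Y"
  proof -
    have "norm S = norm (Y - adjoint_mat Y) / 2" unfolding S_def by simp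
    also have "\<dots> \<le> (norm Y + norm (adjoint_mat Y)) / 2" using norm_triangle_ineq4[of Y "adjoint_mat Y"] by simp
    finally show ?thesis by (simp add: norm_adj)
  qed
  moreover have nP: "norm P \<le> (norm X)^2 / 2"
  proof -
    have "X + adjoint_mat X = - (adjoint_mat X ** X)" using unit_id[OF uA] unfolding X_def by simp
    hence "norm P = norm (adjoint_mat X ** X) / 2" unfolding P_def by simp
    also have "\<dots> \<le> norm (adjoint_mat X) * norm X / 2" using norm_mult_mat[of "adjoint_mat X" X] by simp
    finally show ?thesis by (simp add: norm_adj power2_eq_square)
  qed
  moreover have nR: "norm R \<le> (norm Y)^2 / 2"
  proof -
    have "Y + adjoint_mat Y = - (adjoint_mat Y ** Y)" using unit_id[OF uB] unfolding Y_def by simp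
    hence "norm R = norm (adjoint_mat Y ** Y) / 2" unfolding R_def by simp
    also have "\<dots> \<le> norm (adjoint_mat Y) * norm Y / 2" using norm_mult_mat[of "adjoint_mat Y" Y] by simp
    finally show ?thesis by (simp add: norm_adj power2_eq_square)
  qed
  ultimately have "\<bar>Im (hs B A) - Im (hs B (mat 1)) + Im (hs A (mat 1))\<bar> \<le> norm R * norm Q + norm S * norm P"
    by simp
  also have "\<dots> \<le> (norm Y)^2 / 2 * norm X + norm Y * ((norm X)^2 / 2)"
    by (intro add_mono mult_mono nR nQ nS nP) auto
  finally show ?thesis unfolding X_def Y_def by (simp add: algebra_simps)
qed

definition diagm :: "('n \<Rightarrow> complex) \<Rightarrow> complex^'n^'n" where
  "diagm d = (\<chi> p q. if p = q then d p else 0)"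

lemma mpow_diagm: "mpow (diagm d) n = diagm (\<lambda>p. d p ^ n)"
proof (induction n)
  case 0 show ?case by (simp add: diagm_def mat_def)
next
  case (Suc n)
  have "diagm d ** diagm (\<lambda>p. d p ^ n) = diagm (\<lambda>p. d p ^ Suc n)"
  proof -
    have "(\<Sum>k\<in>UNIV. (if p = k then d p else 0) * (if k = q then d k ^ n else 0)) =
          (if p = q then d p ^ Suc n else 0)" for p q :: 'a
    proof -
      have "(\<Sum>k\<in>UNIV. (if p = k then d p else 0) * (if k = q then d k ^ n else 0)) =
            (\<Sum>k\<in>UNIV. if k = p then (if p = q then d p ^ Suc n else 0) else 0)"
        by (intro sum.cong refl) auto
      thus ?thesis by simp
    qed
    thus ?thesis by (simp add: diagm_def matrix_matrix_mult_def vec_eq_iff)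
  qed
  thus ?case using Suc by simp
qed

lemma mexp_diagm: "mexp (diagm d) = diagm (\<lambda>p. exp (d p))"
proof -
  have e: "(\<Sum>k. x ^ k / fact k) = exp x" for x :: complex
  proof -
    have "(\<lambda>k. x ^ k / fact k) = (\<lambda>n. x^n /\<^sub>R fact n)"
      by (simp add: fun_eq_iff scaleR_conv_of_real divide_inverse mult.commute)
    thus ?thesis using exp_converges[of x] sums_unique by metis
  qed
  show ?thesis
    unfolding mexp_def mpow_diagm by (simp add: diagm_def vec_eq_iff e)
qed

lemma scaleR_diagm: "r *\<^sub>R diagm d = diagm (\<lambda>p. of_real r * d p)"
  by (simp add: diagm_def vec_eq_iff) (simp add: scaleR_conv_of_real)

lemma apply_super_diagm: "apply_super (diagm f) rho = (\<chi> i j. f (i,j) * rho$i$j)"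
proof -
  have "(\<Sum>k\<in>UNIV. \<Sum>l\<in>UNIV. (if (i, j) = (k, l) then f (i, j) else 0) * rho $ k $ l) = f (i,j) * rho$i$j"
    for i j :: 3
  proof -
    have "(\<Sum>k\<in>UNIV. \<Sum>l\<in>UNIV. (if (i, j) = (k, l) then f (i, j) else 0) * rho $ k $ l)
        = (\<Sum>k\<in>UNIV. if k = i then f (i,j) * rho$i$j else 0)"
    proof (intro sum.cong refl)
      fix k :: 3
      show "(\<Sum>l\<in>UNIV. (if (i, j) = (k, l) then f (i, j) else 0) * rho $ k $ l) = (if k = i then f (i,j) * rho$i$j else 0)"
      proof (cases "k = i")
        case True
        have "(\<Sum>l\<in>UNIV. (if (i, j) = (k, l) then f (i, j) else 0) * rho $ k $ l) = (\<Sum>l\<in>UNIV. if l = j then f (i,j) * rho$i$j else 0)"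
          using True by (intro sum.cong refl) auto
        thus ?thesis using True by simp
      qed auto
    qed
    thus ?thesis by simp
  qed
  thus ?thesis by (simp add: apply_super_def diagm_def vec_eq_iff)
qed

definition zz :: "3 \<Rightarrow> complex" where "zz i = clockZ $ i $ i"

lemma clockZ_diagm: "clockZ = diagm zz"
  by (simp add: clockZ_def diagm_def zz_def vec_eq_iff)

lemma weylU1: "weylU 1 = clockZ"
  by (simp add: weylU_def)

lemma lindL1: "lindL 1 = diagm (\<lambda>p. zz (fst p) * cnj (zz (snd p)) - 1)"
  unfolding lindL_def weylU1 clockZ_diagm
  by (auto simp: kron_def mconj_def diagm_def mat_def vec_eq_iff prod_eq_iff)

lemma sum_sel: "(\<Sum>mu\<in>{1..8::nat}. (if mu = 1 then t else 0) *\<^sub>R lindL mu) = t *\<^sub>R lindL 1"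
proof -
  have "(\<Sum>mu\<in>{1..8::nat}. (if mu = 1 then t else 0) *\<^sub>R lindL mu) = (\<Sum>mu\<in>{1..8::nat}. if mu = 1 then t *\<^sub>R lindL mu else 0)"
    by (intro sum.cong refl) auto
  thus ?thesis by simp
qed

definition PhiT :: "real \<Rightarrow> complex^(3 \<times> 3)^(3 \<times> 3)" where
  "PhiT t = diagm (\<lambda>p. exp (of_real t * (zz (fst p) * cnj (zz (snd p)) - 1)))"

lemma Phi_A3Q: "t \<ge> 0 \<Longrightarrow> PhiT t \<in> A3Q"
  unfolding A3Q_def
  apply (rule CollectI)
  apply (rule exI[of _ "\<lambda>mu. if mu = 1 then t else 0"])
  apply (subst sum_sel)
  apply (simp only: lindL1 scaleR_diagm mexp_diagm PhiT_def)
  apply simp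
  done

lemma zz0: "zz 0 = 1" by (simp add: zz_def clockZ_def lessThan_nat_numeral)
lemma zz1: "zz 1 = omega" by (simp add: zz_def clockZ_def lessThan_nat_numeral)
lemma zz2: "zz 2 = omega^2" by (simp add: zz_def clockZ_def lessThan_nat_numeral)

lemma sum_pair: "(\<Sum>q\<in>(UNIV::('a::finite \<times> 'b::finite) set). g q) = (\<Sum>x\<in>UNIV. \<Sum>y\<in>UNIV. g (x,y))"
  by (simp add: sum.cartesian_product UNIV_Times_UNIV[symmetric] del: UNIV_Times_UNIV)

lemma ptr_unit:
  fixes U :: "complex^('n::finite \<times> 'e::finite)^('n \<times> 'e)" and k l :: 'n and r :: real
  shows "ptrace_E (U ** kron (\<chi> x y. if x = k \<and> y = l then 1 else 0) (r *\<^sub>R mat 1) ** adjoint_mat U) $ i $ j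
    = of_real r * (\<Sum>a\<in>UNIV. \<Sum>e\<in>UNIV. U$(i,a)$(k,e) * cnj (U$(j,a)$(l,e)))"
proof -
  define K :: "complex^('n \<times> 'e)^('n \<times> 'e)" where "K = kron (\<chi> x y. if x = k \<and> y = l then 1 else 0) (r *\<^sub>R mat 1)"
  have K: "K $ s $ q = (if fst s = k \<and> fst q = l \<and> snd s = snd q then of_real r else 0)" for s q
  proof -
    have m: "(r *\<^sub>R mat 1 :: complex^'e^'e) $ a $ b = (if a = b then of_real r else 0)" for a b
      by (simp add: mat_def of_real_def)
    show ?thesis unfolding K_def kron_def by (simp only: vec_lambda_beta m) auto
  qed
  have UK: "(U ** K) $ p $ q = (if fst q = l then of_real r * U$p$(k, snd q) else 0)" for p q
  proof -
    have "(U ** K) $ p $ q = (\<Sum>s\<in>UNIV. U$p$s * K$s$q)" by (simp add: matrix_matrix_mult_def)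
    also have "\<dots> = (\<Sum>s\<in>UNIV. if s = (k, snd q) then (if fst q = l then of_real r * U$p$(k, snd q) else 0) else 0)"
      by (intro sum.cong refl) (auto simp: K)
    also have "\<dots> = (if fst q = l then of_real r * U$p$(k, snd q) else 0)" by simp
    finally show ?thesis .
  qed
  have main: "((U ** K) ** adjoint_mat U) $ (i,a) $ (j,a) = of_real r * (\<Sum>e\<in>UNIV. U$(i,a)$(k,e) * cnj (U$(j,a)$(l,e)))" for a
  proof -
    have "((U ** K) ** adjoint_mat U) $ (i,a) $ (j,a) = (\<Sum>q\<in>UNIV. (U ** K)$(i,a)$q * cnj (U$(j,a)$q))"
      by (simp add: matrix_matrix_mult_def adjoint_mat_def)
    also have "\<dots> = (\<Sum>x\<in>UNIV. \<Sum>e\<in>UNIV. (U ** K)$(i,a)$(x,e) * cnj (U$(j,a)$(x,e)))"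
      by (rule sum_pair)
    also have "\<dots> = (\<Sum>x\<in>UNIV. if x = l then (\<Sum>e\<in>UNIV. of_real r * U$(i,a)$(k,e) * cnj (U$(j,a)$(l,e))) else 0)"
      by (intro sum.cong refl) (auto simp: UK)
    also have "\<dots> = of_real r * (\<Sum>e\<in>UNIV. U$(i,a)$(k,e) * cnj (U$(j,a)$(l,e)))"
      by (simp add: sum_distrib_left mult.assoc)
    finally show ?thesis .
  qed
  have "U ** K ** adjoint_mat U = (U ** K) ** adjoint_mat U" by (simp add: matrix_mul_assoc)
  hence "ptrace_E (U ** K ** adjoint_mat U) $ i $ j = (\<Sum>a\<in>UNIV. ((U ** K) ** adjoint_mat U) $ (i,a) $ (j,a))"
    by (simp add: ptrace_E_def)
  also have "\<dots> = of_real r * (\<Sum>a\<in>UNIV. \<Sum>e\<in>UNIV. U$(i,a)$(k,e) * cnj (U$(j,a)$(l,e)))"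
    by (simp add: main sum_distrib_left)
  finally show ?thesis unfolding K_def .
qed

lemma omega_Re: "Re omega = -1/2" 
  by (simp add: omega_def cos_120)
lemma omega_Im: "Im omega = sqrt 3 / 2" 
  using sin_120' by (simp add: omega_def mult.commute)

lemma num_bounds:
  defines "c \<equiv> exp (complex_of_real (1/100) * (omega - 1))"
  shows "Im c > 0" "216 * (1 - Re c)^3 < 81 * (Im c)^2"
proof -
  define s where "s = sqrt 3 / 200"
  define E where "E = exp (- 3 / 200 :: real)"
  have s0: "s > 0" by (simp add: s_def)
  have s2: "s^2 = 3 / 40000" by (simp add: s_def power_divide)
  have sle: "s \<le> 1/100" 
  proof -
    have "s^2 \<le> (1/100)^2" by (simp only: s2) (simp add: power2_eq_square)
    thus ?thesis by (rule power2_le_imp_le) simp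
  qed
  have Rec: "Re c = E * cos s" unfolding c_def Re_exp E_def s_def by (simp add: omega_Re omega_Im)
  have Imc: "Im c = E * sin s" unfolding c_def Im_exp E_def s_def by (simp add: omega_Re omega_Im)
  have E1: "E \<le> 1" by (simp add: E_def)
  have E0: "E \<ge> 197/200" using exp_ge_add_one_self[of "- 3 / 200 :: real"] by (simp add: E_def)
  have sinlb: "sin s \<ge> s - s^3/6"
  proof -
    have "\<bar>sin s - (\<Sum>m<3. sin_coeff m * s ^ m)\<bar> \<le> inverse (fact 3) * \<bar>s\<bar> ^ 3"
      by (rule Maclaurin_sin_bound)
    moreover have "(\<Sum>m<3. sin_coeff m * s ^ m) = s" 
      by (simp add: lessThan_nat_numeral sin_coeff_def)
    ultimately have "\<bar>sin s - s\<bar> \<le> s^3/6" using s0 by (simp add: fact_numeral)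
    thus ?thesis using abs_ge_minus_self[of "sin s - s"] by linarith
  qed
  have coslb: "cos s \<ge> 1 - s^2/2"
  proof -
    have "cos s = 1 - 2 * (sin (s/2))^2" using cos_double_sin[of "s/2"] by simp
    moreover have "sin (s/2) \<le> s/2" using s0 by (intro sin_x_le_x) simp
    moreover have "sin (s/2) \<ge> 0" using s0 sle pi_gt3 by (intro sin_ge_zero) auto
    ultimately have "cos s \<ge> 1 - 2 * (s/2)^2" by (simp add: power_mono)
    thus ?thesis by (simp add: power_divide)
  qed
  define L where "L = 197/200 * (s - s^3/6)"
  have s3: "s^3 = s * (3/40000)" using s2 by (simp add: power3_eq_cube power2_eq_square)
  have L0: "L > 0" unfolding L_def s3 using s0 by simp
  have ImL: "Im c \<ge> L" unfolding Imc L_def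
  proof (rule mult_mono)
    show "s - s^3/6 \<le> sin s" by (rule sinlb)
    show "0 \<le> s - s^3/6" using L0 unfolding L_def by simp
  qed (use E0 in auto)
  show "Im c > 0" using ImL L0 by linarith
  define a0 where "a0 = 1 - 197/200 * (1 - s^2/2)"
  have alpha: "1 - Re c \<le> a0"
  proof -
    have "E * cos s \<ge> E * (1 - s^2/2)" using coslb E0 by (intro mult_left_mono) auto
    moreover have "E * (1 - s^2/2) \<ge> 197/200 * (1 - s^2/2)" using E0 s2 by (intro mult_right_mono) auto
    ultimately show ?thesis unfolding a0_def Rec by linarith
  qed
  have alpha0: "1 - Re c \<ge> 0"
  proof -
    have "Re c \<le> cmod c" by (rule complex_Re_le_cmod)
    also have "cmod c = E" unfolding c_def E_def by (simp add: omega_Re)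
    finally show ?thesis using E1 by linarith
  qed
  have "(1 - Re c)^3 \<le> a0^3" using alpha alpha0 by (intro power_mono) auto
  also have "a0 = 1 - 197/200 * (1 - 3/80000)" unfolding a0_def s2 by simp
  finally have A: "216 * (1 - Re c)^3 \<le> 216 * (1 - 197/200 * (1 - 3/80000))^3" by simp
  have "L^2 \<le> (Im c)^2" using ImL L0 by (intro power_mono) auto
  moreover have "L^2 = (197/200)^2 * s^2 * (1 - s^2/6)^2"
    unfolding L_def by (simp add: power2_eq_square power3_eq_cube algebra_simps)
  ultimately have B: "(197/200)^2 * (3/40000) * (1 - (3/40000)/6)^2 \<le> (Im c)^2" unfolding s2 by simp
  show "216 * (1 - Re c)^3 < 81 * (Im c)^2" using A B by (simp add: power_divide)
qed

lemma omega_cnj_mult: "cnj omega * omega = 1"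
  by (simp add: omega_def cis_cnj cis_mult)
lemma omega3: "omega^3 = 1"
proof -
  have "omega^3 = cis (real 3 * (2 * pi / 3))" unfolding omega_def by (rule Complex.DeMoivre)
  also have "real 3 * (2 * pi / 3) = 2 * pi" by simp
  finally show ?thesis by (simp add: complex_eq_iff)
qed
lemma omega_cnj: "cnj omega = omega^2"
proof -
  have "cnj omega = cnj omega * omega^3" by (simp add: omega3)
  also have "\<dots> = (cnj omega * omega) * omega^2" by (simp add: power3_eq_cube power2_eq_square)
  finally show ?thesis by (simp add: omega_cnj_mult)
qed
lemma omega21: "omega^2 * cnj omega = omega"
proof -
  have "omega^2 * cnj omega = omega^3 * omega" by (simp add: omega_cnj power2_eq_square power3_eq_cube)
  thus ?thesis by (simp add: omega3)
qed
lemma norm_omega: "cmod omega = 1" by (simp add: omega_def)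

lemma zz3: "zz 3 = 1" by (simp add: zz_def clockZ_def lessThan_nat_numeral)

lemma zz_norm: "zz i * cnj (zz i) = 1"
proof -
  have "cmod (zz i) = 1"
    using exhaust_3[of i] by (auto simp: zz1 zz2 zz3 norm_omega norm_power)
  thus ?thesis using complex_norm_square[of "zz i"] by simp
qed

lemma adj_mult: "adjoint_mat ((M::complex^'k^'n) ** (N::complex^'m^'k)) = adjoint_mat N ** adjoint_mat M"
  by (simp add: adjoint_mat_def matrix_matrix_mult_def vec_eq_iff mult.commute)

lemma hs_prod: "hs ((M::complex^'k^'n) ** adjoint_mat N) (mat 1) = hs M N"
  unfolding hs_mat1 by (simp add: hs_def matrix_matrix_mult_def adjoint_mat_def)

lemma notuni: "\<not> unistochastic (PhiT (1/100))"
proof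
  assume "unistochastic (PhiT (1/100))"
  then obtain U :: "complex^(3 \<times> 3)^(3 \<times> 3)" where uU: "unitary_mat U" and
    H: "\<And>rho. apply_super (PhiT (1/100)) rho =
           ptrace_E (U ** kron rho ((1/3) *\<^sub>R (mat 1 :: complex^3^3)) ** adjoint_mat U)"
    unfolding unistochastic_def by blast
  define f where "f p = exp (complex_of_real (1/100) * (zz (fst p) * cnj (zz (snd p)) - 1))" for p :: "3 \<times> 3"
  have Phi_eq: "PhiT (1/100) = diagm f" unfolding PhiT_def f_def ..
  have HE: "f (i,j) * (if i = k \<and> j = l then 1 else 0)
      = complex_of_real (1/3) * (\<Sum>a\<in>UNIV. \<Sum>e\<in>UNIV. U$(i,a)$(k,e) * cnj (U$(j,a)$(l,e)))" for i j k l :: 3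
  proof -
    have "apply_super (PhiT (1/100)) (\<chi> x y. if x = k \<and> y = l then 1 else 0) $ i $ j =
          ptrace_E (U ** kron (\<chi> x y. if x = k \<and> y = l then 1 else 0) ((1/3) *\<^sub>R (mat 1 :: complex^3^3)) ** adjoint_mat U) $ i $ j"
      by (simp only: H)
    thus ?thesis unfolding Phi_eq apply_super_diagm ptr_unit by simp
  qed
  have fdiag: "f (i,i) = 1" for i unfolding f_def by (simp add: zz_norm)
  have zero: "U$(i,a)$(k,e) = 0" if "i \<noteq> k" for i k a e
  proof -
    have "(\<Sum>a\<in>UNIV. \<Sum>e\<in>UNIV. U$(i,a)$(k,e) * cnj (U$(i,a)$(k,e))) = 0"
      using HE[of i i k k] that fdiag by simp
    moreover have "complex_of_real (\<Sum>a\<in>UNIV. \<Sum>e\<in>UNIV. (cmod (U$(i,a)$(k,e)))^2)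
        = (\<Sum>a\<in>UNIV. \<Sum>e\<in>UNIV. U$(i,a)$(k,e) * cnj (U$(i,a)$(k,e)))"
      by (simp only: of_real_sum) (intro sum.cong refl complex_norm_square)
    ultimately have "complex_of_real (\<Sum>a\<in>UNIV. \<Sum>e\<in>UNIV. (cmod (U$(i,a)$(k,e)))^2) = 0"
      by simp
    hence s0: "(\<Sum>a\<in>UNIV. \<Sum>e\<in>UNIV. (cmod (U$(i,a)$(k,e)))^2) = 0" by (simp only: of_real_eq_0_iff)
    have "(\<Sum>e\<in>UNIV. (cmod (U$(i,a)$(k,e)))^2) = 0"
      using s0 by (subst (asm) sum_nonneg_eq_0_iff) (auto intro: sum_nonneg)
    hence "(cmod (U$(i,a)$(k,e)))^2 = 0"
      by (subst (asm) sum_nonneg_eq_0_iff) auto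
    thus ?thesis by simp
  qed
  define V where "V k = (\<chi> a e. U$(k,a)$(k,e))" for k
  have hsV: "hs (V k) (V l) = 3 * f (k,l)" for k l
  proof -
    have "f (k,l) * 3 = hs (V k) (V l)" using HE[of k l k l] by (simp add: hs_def V_def)
    thus ?thesis by (metis mult.commute)
  qed
  have uV1: "adjoint_mat (V k) ** V k = mat 1" for k
  proof -
    have "(adjoint_mat (V k) ** V k) $ e $ e' = (mat 1 :: complex^3^3) $ e $ e'" for e e'
    proof -
      have "(adjoint_mat U ** U) $ (k,e) $ (k,e') = (mat 1 :: complex^(3\<times>3)^(3\<times>3)) $ (k,e) $ (k,e')"
        using uU unfolding unitary_mat_def by simp
      hence "(\<Sum>q\<in>UNIV. cnj (U$q$(k,e)) * U$q$(k,e')) = (if e = e' then 1 else 0)"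
        by (simp add: matrix_matrix_mult_def adjoint_mat_def mat_def)
      hence "(\<Sum>m\<in>UNIV. \<Sum>a\<in>UNIV. cnj (U$(m,a)$(k,e)) * U$(m,a)$(k,e')) = (if e = e' then 1 else 0)"
        by (simp only: sum_pair)
      moreover have "(\<Sum>m\<in>UNIV. \<Sum>a\<in>UNIV. cnj (U$(m,a)$(k,e)) * U$(m,a)$(k,e')) =
          (\<Sum>m\<in>UNIV. if m = k then (\<Sum>a\<in>UNIV. cnj (V k $ a $ e) * V k $ a $ e') else 0)"
        by (intro sum.cong refl) (auto simp: zero V_def)
      ultimately show ?thesis by (simp add: matrix_matrix_mult_def adjoint_mat_def mat_def)
    qed
    thus ?thesis by (simp add: vec_eq_iff)
  qed
  have uV2: "V k ** adjoint_mat (V k) = mat 1" for k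
  proof -
    have "(V k ** adjoint_mat (V k)) $ a $ a' = (mat 1 :: complex^3^3) $ a $ a'" for a a'
    proof -
      have "(U ** adjoint_mat U) $ (k,a) $ (k,a') = (mat 1 :: complex^(3\<times>3)^(3\<times>3)) $ (k,a) $ (k,a')"
        using uU unfolding unitary_mat_def by simp
      hence "(\<Sum>q\<in>UNIV. U$(k,a)$q * cnj (U$(k,a')$q)) = (if a = a' then 1 else 0)"
        by (simp add: matrix_matrix_mult_def adjoint_mat_def mat_def)
      hence "(\<Sum>m\<in>UNIV. \<Sum>e\<in>UNIV. U$(k,a)$(m,e) * cnj (U$(k,a')$(m,e))) = (if a = a' then 1 else 0)"
        by (simp only: sum_pair)
      moreover have "(\<Sum>m\<in>UNIV. \<Sum>e\<in>UNIV. U$(k,a)$(m,e) * cnj (U$(k,a')$(m,e))) =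
          (\<Sum>m\<in>UNIV. if m = k then (\<Sum>e\<in>UNIV. V k $ a $ e * cnj (V k $ a' $ e)) else 0)"
        by (intro sum.cong refl) (auto simp: zero V_def)
      ultimately show ?thesis by (simp add: matrix_matrix_mult_def adjoint_mat_def mat_def)
    qed
    thus ?thesis by (simp add: vec_eq_iff)
  qed
  define A where "A = V 1 ** adjoint_mat (V 0)"
  define B where "B = V 2 ** adjoint_mat (V 0)"
  have uA: "adjoint_mat A ** A = mat 1"
  proof -
    have "adjoint_mat A ** A = V 0 ** (adjoint_mat (V 1) ** V 1) ** adjoint_mat (V 0)"
      unfolding A_def adj_mult adj_adj by (simp add: matrix_mul_assoc)
    thus ?thesis by (simp add: uV1 uV2)
  qed
  have uB: "adjoint_mat B ** B = mat 1"
  proof -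
    have "adjoint_mat B ** B = V 0 ** (adjoint_mat (V 2) ** V 2) ** adjoint_mat (V 0)"
      unfolding B_def adj_mult adj_adj by (simp add: matrix_mul_assoc)
    thus ?thesis by (simp add: uV1 uV2)
  qed
  have BA: "B ** adjoint_mat A = V 2 ** adjoint_mat (V 1)"
  proof -
    have "B ** adjoint_mat A = V 2 ** (adjoint_mat (V 0) ** V 0) ** adjoint_mat (V 1)"
      unfolding A_def B_def adj_mult adj_adj by (simp add: matrix_mul_assoc)
    thus ?thesis by (simp add: uV1)
  qed
  define c where "c = exp (complex_of_real (1/100) * (omega - 1))"
  have f10: "f (1,0) = c" unfolding f_def c_def by (simp add: zz0 zz1)
  have f20: "f (2,0) = cnj c" unfolding f_def c_def by (simp add: zz0 zz2 exp_cnj omega_cnj)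
  have f21: "f (2,1) = c" unfolding f_def c_def by (simp add: zz1 zz2 omega21)
  have tA: "hs A (mat 1) = 3 * c" unfolding A_def hs_prod hsV f10 ..
  have tB: "hs B (mat 1) = 3 * cnj c" unfolding B_def hs_prod hsV f20 ..
  have tBA: "hs B A = 3 * c"
  proof -
    have "hs B A = hs (B ** adjoint_mat A) (mat 1)" by (simp add: hs_prod)
    also have "\<dots> = 3 * c" unfolding BA hs_prod hsV f21 ..
    finally show ?thesis .
  qed
  have ki: "\<bar>Im (hs B A) - Im (hs B (mat 1)) + Im (hs A (mat 1))\<bar>
         \<le> norm (A - mat 1) * (norm (B - mat 1))^2 / 2 + (norm (A - mat 1))^2 * norm (B - mat 1) / 2"
    by (rule key_ineq[OF uA uB])
  have nA: "(norm (A - mat 1))^2 = 6 - 6 * Re c" using norm_unit_sq[OF uA] tA by simp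
  have nB: "(norm (B - mat 1))^2 = 6 - 6 * Re c" using norm_unit_sq[OF uB] tB by simp
  have nAB: "norm (A - mat 1) = norm (B - mat 1)" by (rule power2_eq_imp_eq) (use nA nB in auto)
  define n where "n = norm (A - mat 1)"
  have n0: "n \<ge> 0" unfolding n_def by simp
  have cb: "Im c > 0" "216 * (1 - Re c)^3 < 81 * (Im c)^2" unfolding c_def by (rule num_bounds)+
  have "\<bar>9 * Im c\<bar> \<le> n^3" using ki unfolding tA tB tBA nAB[symmetric] n_def[symmetric]
    by (simp add: power2_eq_square power3_eq_cube)
  hence "9 * Im c \<le> n^3" using cb by simp
  hence "(9 * Im c)^2 \<le> (n^3)^2" using cb by (intro power_mono) auto
  also have "(n^3)^2 = (n^2)^3" by (simp add: power_mult[symmetric] mult.commute)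
  also have "n^2 = 6 - 6 * Re c" unfolding n_def by (rule nA)
  finally have h: "(9 * Im c)^2 \<le> (6 - 6 * Re c)^3" .
  have "(6 - 6 * Re c)^3 = 216 * (1 - Re c)^3"
  proof -
    have e: "6 - 6 * Re c = 6 * (1 - Re c)" by simp
    show ?thesis unfolding e by (simp only: power_mult_distrib) simp
  qed
  hence "81 * (Im c)^2 \<le> 216 * (1 - Re c)^3" using h by (simp add: power_mult_distrib)
  thus False using cb by linarith
qed

theorem proposition8:
  shows "\<exists>Phi \<in> A3Q. \<not> unistochastic Phi"
  using Phi_A3Q[of "1/100"] notuni by auto

end
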